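(* There exists $D>0$ independent of $n$ such that, for Pólya trees $t$ with $D\le |t|\le n$, \[ [z^n]S_t(z) = \frac{\tilde\rho^{-n}}{n}\left(1+\mathcal{O}\!\left(\frac{1}{\sqrt{\ln n}}\right)\right) \quad\text{as } n\to\infty, \] where the $\mathcal{O}$-term is uniform in $t$ with $D\le|t|\le n$ and $\tilde\rho=\tilde\rho(t)$ is the smallest positive real number satisfying $\int_0^{\tilde\rho} e^{-w(t)v^{|t|}}\,dv=1$.
   Context: A Pólya tree is an unlabeled rooted non-plane tree; $|t|$ is its number of nodes. A recursive tree is a rooted non-plane tree whose $n$ nodes are labeled $1,\dots,n$ increasingly along every path from the root. For a Pólya tree $t$ with $k$ nodes, $\ell(t)$ is the number of increasing labelings of $t$, $w(t)=\ell(t)/k!$, and $S_t(z)=\ln\frac{1}{1-G(z)}-w(t)z^k$ with $G(z)=\int_0^z e^{-w(t)v^k}\,dv$ (an entire function) is the exponential generating function of recursive trees having no fringe subtree (node together with all descendants) of shape $t$; $\tilde\rho$ is its dominant singularity. *)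

theory Defs
  imports "HOL-Analysis.Analysis" "HOL-Library.Multiset"
    "HOL-Computational_Algebra.Formal_Power_Series"
begin

text \<open>Polya trees: unlabeled rooted non-plane trees; the children of a node
  form a multiset of subtrees.\<close>
datatype ptree = PNode "ptree multiset"

function psize :: "ptree \<Rightarrow> nat" where
  "psize (PNode M) = 1 + sum_mset (image_mset psize M)"
  by pat_completeness auto
termination
proof (relation "Wellfounded.measure size")
  fix M :: "ptree multiset" and z assume "z \<in># M"
  then obtain M' where "M = add_mset z M'" by (metis multi_member_split)
  then show "(z, PNode M) \<in> Wellfounded.measure size" by simp
qed auto

text \<open>Recursive trees on nodes 1..n: node 1 is the root and every node i with
  2 \<le> i \<le> n has a parent p i with 1 \<le> p i < i (labels increase along every
  path from the root).  Outside 2..n the parent function is fixed to 0 so that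
  recursive trees correspond bijectively to parent functions.\<close>
definition rec_trees :: "nat \<Rightarrow> (nat \<Rightarrow> nat) set" where
  "rec_trees n = {p. (\<forall>i. 2 \<le> i \<and> i \<le> n \<longrightarrow> 1 \<le> p i \<and> p i < i)
                    \<and> (\<forall>i. \<not> (2 \<le> i \<and> i \<le> n) \<longrightarrow> p i = 0)}"

function shape_at :: "(nat \<Rightarrow> nat) \<Rightarrow> nat \<Rightarrow> nat \<Rightarrow> ptree" where
  "shape_at p n v =
     PNode (image_mset (shape_at p n) (mset_set {i. v < i \<and> i \<le> n \<and> p i = v}))"
  by pat_completeness auto
termination
  by (relation "Wellfounded.measure (\<lambda>(p, n, v). n - v)") auto

definition num_inc_labelings :: "ptree \<Rightarrow> nat" where
  "num_inc_labelings t =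
     card {p \<in> rec_trees (psize t). shape_at p (psize t) 1 = t}"

definition wt :: "ptree \<Rightarrow> real" where
  "wt t = real (num_inc_labelings t) / fact (psize t)"

definition G_fps :: "ptree \<Rightarrow> real fps" where
  "G_fps t = fps_integral (fps_exp (- wt t) oo fps_X ^ psize t) 0"

text \<open>S_t(z) = ln(1/(1 - G(z))) - w(t) z^k, where ln(1/(1-x)) = - ln(1 + (-x)).\<close>
definition S_fps :: "ptree \<Rightarrow> real fps" where
  "S_fps t = - (fps_ln 1 oo (- G_fps t)) - fps_const (wt t) * fps_X ^ psize t"

definition rho_t :: "ptree \<Rightarrow> real" where
  "rho_t t = Inf {r. 0 < r \<and> integral {0..r} (\<lambda>v. exp (- wt t * v ^ psize t)) = 1}"

end

theory Submission
  imports Defs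
begin


function isdesc :: "(nat \<Rightarrow> nat) \<Rightarrow> nat \<Rightarrow> nat \<Rightarrow> bool" where
  "isdesc p v i = (if i = v then True else if v < i \<and> p i < i then isdesc p v (p i) else False)"
  by pat_completeness auto
termination by (relation "Wellfounded.measure (\<lambda>(p, v, i). i)") auto

declare isdesc.simps[simp del]

lemma isdesc_refl[simp]: "isdesc p v v"
  by (subst isdesc.simps) simp

lemma isdesc_le: "isdesc p v i \<Longrightarrow> v \<le> i"
proof (induction i rule: less_induct)
  case (less i)
  then show ?case by (subst (asm) isdesc.simps) (auto split: if_splits)
qed

lemma isdesc_trans: "isdesc p a b \<Longrightarrow> isdesc p b i \<Longrightarrow> isdesc p a i"
proof (induction i rule: less_induct)
  case (less i)
  show ?case
  proof (cases "i = b")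
    case True then show ?thesis using less by simp
  next
    case False
    with less.prems(2) have h: "b < i" "p i < i" "isdesc p b (p i)"
      by (subst (asm) isdesc.simps, auto split: if_splits)+
    have "isdesc p a (p i)" using less.IH[OF h(2) less.prems(1) h(3)] .
    moreover have "a < i" using isdesc_le[OF less.prems(1)] h(1) by simp
    ultimately show ?thesis using h(2) by (subst isdesc.simps) auto
  qed
qed

lemma isdesc_linear: "isdesc p a i \<Longrightarrow> isdesc p b i \<Longrightarrow> a \<le> b \<Longrightarrow> isdesc p a b"
proof (induction i rule: less_induct)
  case (less i)
  show ?case
  proof (cases "b = i")
    case True then show ?thesis using less by simp
  next
    case False
    with less.prems(2) have h: "b < i" "p i < i" "isdesc p b (p i)"
      by (subst (asm) isdesc.simps, auto split: if_splits)+
    have "a \<noteq> i" using h(1) less.prems(3) by simp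
    with less.prems(1) have "isdesc p a (p i)"
      by (subst (asm) isdesc.simps, auto split: if_splits)
    then show ?thesis using less.IH[OF h(2) _ h(3) less.prems(3)] by simp
  qed
qed

lemma isdesc_step: "isdesc p v i \<Longrightarrow> i \<noteq> v \<Longrightarrow> v < i \<and> p i < i \<and> isdesc p v (p i)"
  by (subst (asm) isdesc.simps) (auto split: if_splits)

lemma isdesc_child: "v < c \<Longrightarrow> p c = v \<Longrightarrow> isdesc p v c"
  by (subst isdesc.simps) auto

lemma isdesc_has_child:
  "isdesc p v i \<Longrightarrow> i \<noteq> v \<Longrightarrow> \<exists>c. v < c \<and> c \<le> i \<and> p c = v \<and> isdesc p c i"
proof (induction i rule: less_induct)
  case (less i)
  from isdesc_step[OF less.prems] have h: "v < i" "p i < i" "isdesc p v (p i)" by auto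
  show ?case
  proof (cases "p i = v")
    case True then show ?thesis using h by (intro exI[of _ i]) auto
  next
    case False
    from less.IH[OF h(2) h(3) False] obtain c where c: "v < c" "c \<le> p i" "p c = v" "isdesc p c (p i)"
      by blast
    have "isdesc p c i" using c(2) h(2) c(4) by (subst isdesc.simps) auto
    then show ?thesis using c h by (intro exI[of _ c]) auto
  qed
qed

definition desc :: "(nat \<Rightarrow> nat) \<Rightarrow> nat \<Rightarrow> nat \<Rightarrow> nat set" where
  "desc p n v = {i. i \<le> n \<and> isdesc p v i}"

lemma finite_desc[simp]: "finite (desc p n v)"
  unfolding desc_def by auto

definition chil :: "(nat \<Rightarrow> nat) \<Rightarrow> nat \<Rightarrow> nat \<Rightarrow> nat set" where
  "chil p n v = {i. v < i \<and> i \<le> n \<and> p i = v}"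

lemma finite_chil[simp]: "finite (chil p n v)"
  unfolding chil_def by auto

lemma desc_decomp:
  assumes "v \<le> n"
  shows "desc p n v = insert v (\<Union>c\<in>chil p n v. desc p n c)"
proof (intro equalityI subsetI)
  fix i assume "i \<in> desc p n v"
  then have i: "i \<le> n" "isdesc p v i" by (auto simp: desc_def)
  show "i \<in> insert v (\<Union>c\<in>chil p n v. desc p n c)"
  proof (cases "i = v")
    case False
    from isdesc_has_child[OF i(2) False] obtain c where "v < c" "c \<le> i" "p c = v" "isdesc p c i"
      by blast
    then show ?thesis using i by (auto simp: desc_def chil_def)
  qed simp
next
  fix i assume "i \<in> insert v (\<Union>c\<in>chil p n v. desc p n c)"
  then show "i \<in> desc p n v"
    using assms by (auto simp: desc_def chil_def intro: isdesc_trans[OF isdesc_child])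
qed

lemma psize_shape_at: "v \<le> n \<Longrightarrow> psize (shape_at p n v) = card (desc p n v)"
proof (induction p n v rule: shape_at.induct)
  case (1 p n v)
  have C: "{i. v < i \<and> i \<le> n \<and> p i = v} = chil p n v" by (simp add: chil_def)
  have IH: "\<And>c. c \<in> chil p n v \<Longrightarrow> psize (shape_at p n c) = card (desc p n c)"
    using 1 by (auto simp: chil_def)
  have "psize (shape_at p n v) = 1 + (\<Sum>c\<in>chil p n v. psize (shape_at p n c))"
  proof -
    have "shape_at p n v = PNode (image_mset (shape_at p n) (mset_set (chil p n v)))"
      by (subst shape_at.simps) (simp add: C)
    then show ?thesis
      by (simp del: shape_at.simps add: sum_unfold_sum_mset image_mset.compositionality comp_def)
  qed
  also have "\<dots> = 1 + (\<Sum>c\<in>chil p n v. card (desc p n c))"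
    using IH by simp
  also have "(\<Sum>c\<in>chil p n v. card (desc p n c)) = card (\<Union>c\<in>chil p n v. desc p n c)"
  proof (rule card_UN_disjoint[symmetric])
    show "\<forall>i\<in>chil p n v. \<forall>j\<in>chil p n v. i \<noteq> j \<longrightarrow> desc p n i \<inter> desc p n j = {}"
    proof (intro ballI impI)
      fix c c' assume c: "c \<in> chil p n v" "c' \<in> chil p n v" "c \<noteq> c'"
      show "desc p n c \<inter> desc p n c' = {}"
      proof (rule ccontr)
        assume "desc p n c \<inter> desc p n c' \<noteq> {}"
        then obtain i where i: "isdesc p c i" "isdesc p c' i" by (auto simp: desc_def)
        have *: False if "a \<in> chil p n v" "b \<in> chil p n v" "a < b" "isdesc p a i" "isdesc p b i" for a b
        proof -
          have "isdesc p a b" using isdesc_linear[OF that(4,5)] that(3) by simp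
          then have "isdesc p a (p b)" using isdesc_step[of p a b] that(3) by auto
          then have "a \<le> v" using isdesc_le that(2) by (auto simp: chil_def)
          then show False using that(1) by (auto simp: chil_def)
        qed
        show False
          using c i *[of c c'] *[of c' c] by (cases "c < c'") auto
      qed
    qed
  qed auto
  also have "1 + card (\<Union>c\<in>chil p n v. desc p n c) = card (desc p n v)"
  proof -
    have "v \<notin> (\<Union>c\<in>chil p n v. desc p n c)"
      by (auto simp: chil_def desc_def dest: isdesc_le)
    then show ?thesis using desc_decomp[OF 1(2), of p] by simp
  qed
  finally show ?case .
qed

lemma rec_trees_1: "rec_trees 1 = {\<lambda>_. 0}"
  unfolding rec_trees_def by (auto simp: fun_eq_iff)

lemma rec_trees_Suc:
  assumes "k \<ge> 1"
  shows "rec_trees (Suc k) = (\<lambda>(p, q). p(Suc k := q)) ` (rec_trees k \<times> {1..k})"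
proof (intro equalityI subsetI)
  fix p' assume p': "p' \<in> rec_trees (Suc k)"
  let ?p = "p'(Suc k := 0)"
  have "?p \<in> rec_trees k" using p' unfolding rec_trees_def
    by (auto simp: le_Suc_eq)
  moreover have "p' (Suc k) \<in> {1..k}" using p' assms unfolding rec_trees_def
    by (auto dest!: spec[of _ "Suc k"])
  moreover have "p' = (\<lambda>(p, q). p(Suc k := q)) (?p, p' (Suc k))" by simp
  ultimately show "p' \<in> (\<lambda>(p, q). p(Suc k := q)) ` (rec_trees k \<times> {1..k})"
    by blast
next
  fix p' assume "p' \<in> (\<lambda>(p, q). p(Suc k := q)) ` (rec_trees k \<times> {1..k})"
  then obtain p q where pq: "p \<in> rec_trees k" "q \<in> {1..k}" "p' = p(Suc k := q)" by auto
  then show "p' \<in> rec_trees (Suc k)" unfolding rec_trees_def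
    by (auto simp: le_Suc_eq)
qed

lemma rec_trees_Suc_inj:
  "inj_on (\<lambda>(p, q). p(Suc k := q)) (rec_trees k \<times> {1..k})"
proof (rule inj_onI, clarify)
  fix p q p' q' assume h: "p \<in> rec_trees k" "p' \<in> rec_trees k" "p(Suc k := q) = p'(Suc k := q')"
  have "p (Suc k) = 0" "p' (Suc k) = 0" using h(1,2) unfolding rec_trees_def by auto
  then show "p = p' \<and> q = q'" using h(3)
    by (metis fun_upd_idem fun_upd_upd fun_upd_same)
qed

lemma finite_rec_trees: "finite (rec_trees k)"
proof (induction k)
  case 0
  have "rec_trees 0 = {\<lambda>_. 0}" unfolding rec_trees_def by (auto simp: fun_eq_iff)
  then show ?case by simp
next
  case (Suc k)
  show ?case
  proof (cases "k = 0")
    case True then show ?thesis using rec_trees_1 by simp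
  next
    case False
    then show ?thesis using Suc rec_trees_Suc[of k] by simp
  qed
qed

lemma isdesc_upd: "i \<le> k \<Longrightarrow> isdesc (p(Suc k := q)) v i = isdesc p v i"
proof (induction i rule: less_induct)
  case (less i)
  have e: "(p(Suc k := q)) i = p i" using less.prems by simp
  have "isdesc (p(Suc k := q)) v i = (if i = v then True else if v < i \<and> p i < i then isdesc (p(Suc k := q)) v (p i) else False)"
    by (simp only: isdesc.simps[of "p(Suc k := q)" v i] e)
  also have "\<dots> = (if i = v then True else if v < i \<and> p i < i then isdesc p v (p i) else False)"
  proof -
    have IH': "isdesc (p(Suc k := q)) v (p i) = isdesc p v (p i)" if "p i < i"
      using less.IH[of "p i"] that less.prems by (simp add: fun_upd_def)
    show ?thesis using IH' by (simp only: if_splits) blast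
  qed
  also have "\<dots> = isdesc p v i"
    by (simp only: isdesc.simps[of p v i])
  finally show ?case .
qed

definition cd :: "(nat \<Rightarrow> nat) \<Rightarrow> nat \<Rightarrow> nat" where
  "cd p k = card (desc p k 2)"

lemma desc_upd:
  assumes "k \<ge> 2" "q \<le> k"
  shows "desc (p(Suc k := q)) (Suc k) 2 = desc p k 2 \<union> (if isdesc p 2 q then {Suc k} else {})"
proof -
  have a: "isdesc (p(Suc k := q)) 2 (Suc k) = isdesc p 2 q"
    using assms by (subst isdesc.simps) (simp add: isdesc_upd)
  show ?thesis
    using assms a isdesc_upd[of _ k p q 2] unfolding desc_def
    by (auto simp: le_Suc_eq)
qed

lemma cd_upd:
  assumes "k \<ge> 2" "q \<le> k"
  shows "cd (p(Suc k := q)) (Suc k) = cd p k + (if q \<in> desc p k 2 then 1 else 0)"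
proof -
  have "Suc k \<notin> desc p k 2" by (auto simp: desc_def)
  then show ?thesis using desc_upd[OF assms, of p] assms
    by (auto simp: cd_def desc_def)
qed

lemma desc_sub: "desc p k 2 \<subseteq> {2..k}"
  by (auto simp: desc_def dest: isdesc_le)

lemma cd_bounds: "k \<ge> 2 \<Longrightarrow> 1 \<le> cd p k \<and> cd p k \<le> k - 1"
proof -
  assume k: "k \<ge> 2"
  have "2 \<in> desc p k 2" using k by (auto simp: desc_def)
  then have "card (desc p k 2) \<ge> 1" by (metis card_0_eq finite_desc empty_iff less_one not_le)
  moreover have "card (desc p k 2) \<le> card {2..k}" by (rule card_mono) (auto simp: desc_sub)
  ultimately show ?thesis by (simp add: cd_def)
qed

definition Ncnt :: "nat \<Rightarrow> nat \<Rightarrow> nat" where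
  "Ncnt k s = card {p \<in> rec_trees k. cd p k = s}"

lemma card_fiber:
  assumes "D \<subseteq> {1..k}" "card D = c"
  shows "card {q \<in> {1..k}. c + (if q \<in> D then 1 else 0) = s} =
         (if c + 1 = s then c else 0) + (if c = s then k - c else 0)"
proof -
  have fD: "finite D" using assms(1) finite_subset by blast
  consider "s = c" | "s = c + 1" | "s \<noteq> c \<and> s \<noteq> c + 1" by blast
  then show ?thesis
  proof cases
    case 1
    then have "{q \<in> {1..k}. c + (if q \<in> D then 1 else 0) = s} = {1..k} - D" by auto
    then show ?thesis using 1 assms card_Diff_subset[OF fD assms(1)] by simp
  next
    case 2
    then have "{q \<in> {1..k}. c + (if q \<in> D then 1 else 0) = s} = D" using assms(1) by auto
    then show ?thesis using 2 assms by simp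
  next
    case 3
    then have "{q \<in> {1..k}. c + (if q \<in> D then 1 else 0) = s} = {}" by auto
    then show ?thesis using 3 by auto
  qed
qed

lemma Ncnt_Suc:
  assumes k: "k \<ge> 2"
  shows "Ncnt (Suc k) s = (if 1 \<le> s then (s - 1) * Ncnt k (s - 1) else 0) + (k - s) * Ncnt k s"
proof -
  let ?h = "\<lambda>(p, q). p(Suc k := q)"
  let ?P = "\<lambda>p q. cd p k + (if q \<in> desc p k 2 then 1 else 0) = s"
  have "{p' \<in> rec_trees (Suc k). cd p' (Suc k) = s} = ?h ` {pq \<in> rec_trees k \<times> {1..k}. ?P (fst pq) (snd pq)}"
  proof -
    have "{p' \<in> rec_trees (Suc k). cd p' (Suc k) = s} = {p' \<in> ?h ` (rec_trees k \<times> {1..k}). cd p' (Suc k) = s}"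
      using rec_trees_Suc[of k] k by simp
    also have "\<dots> = ?h ` {pq \<in> rec_trees k \<times> {1..k}. ?P (fst pq) (snd pq)}"
      using cd_upd[OF k] by (auto simp: image_iff)
    finally show ?thesis .
  qed
  then have "Ncnt (Suc k) s = card (?h ` {pq \<in> rec_trees k \<times> {1..k}. ?P (fst pq) (snd pq)})"
    by (simp add: Ncnt_def)
  also have "\<dots> = card {pq \<in> rec_trees k \<times> {1..k}. ?P (fst pq) (snd pq)}"
    by (rule card_image, rule inj_on_subset[OF rec_trees_Suc_inj]) auto
  also have "{pq \<in> rec_trees k \<times> {1..k}. ?P (fst pq) (snd pq)} = Sigma (rec_trees k) (\<lambda>p. {q \<in> {1..k}. ?P p q})"
    by auto
  also have "card \<dots> = (\<Sum>p\<in>rec_trees k. card {q \<in> {1..k}. ?P p q})"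
    by (rule card_SigmaI) (auto simp: finite_rec_trees)
  also have "\<dots> = (\<Sum>p\<in>rec_trees k. (if cd p k + 1 = s then cd p k else 0) + (if cd p k = s then k - cd p k else 0))"
  proof (rule sum.cong[OF refl])
    fix p assume "p \<in> rec_trees k"
    have "desc p k 2 \<subseteq> {1..k}" using desc_sub[of p k] by auto
    then show "card {q \<in> {1..k}. ?P p q} = (if cd p k + 1 = s then cd p k else 0) + (if cd p k = s then k - cd p k else 0)"
      by (rule card_fiber) (simp add: cd_def)
  qed
  also have "\<dots> = (\<Sum>p\<in>rec_trees k. (if cd p k + 1 = s then s - 1 else 0)) + (\<Sum>p\<in>rec_trees k. (if cd p k = s then k - s else 0))"
    by (subst sum.distrib[symmetric]) (rule sum.cong, auto)
  also have "(\<Sum>p\<in>rec_trees k. (if cd p k + 1 = s then s - 1 else 0)) = (if 1 \<le> s then (s - 1) * Ncnt k (s - 1) else 0)"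
  proof (cases "1 \<le> s")
    case True
    then have "(\<Sum>p\<in>rec_trees k. (if cd p k + 1 = s then s - 1 else 0)) = (\<Sum>p\<in>rec_trees k. (if cd p k = s - 1 then s - 1 else 0))"
      by (intro sum.cong) auto
    also have "\<dots> = (\<Sum>p\<in>{p \<in> rec_trees k. cd p k = s - 1}. s - 1)"
      by (subst sum.inter_filter[symmetric]) (auto simp: finite_rec_trees)
    finally show ?thesis using True by (simp add: Ncnt_def)
  qed auto
  also have "(\<Sum>p\<in>rec_trees k. (if cd p k = s then k - s else 0)) = (k - s) * Ncnt k s"
    by (subst sum.inter_filter[symmetric]) (auto simp: finite_rec_trees Ncnt_def)
  finally show ?thesis .
qed

lemma rec_trees_2: "rec_trees 2 = {(\<lambda>_. 0)(2 := 1)}"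
  using rec_trees_Suc[of 1] rec_trees_1 by (simp add: numeral_2_eq_2)

lemma Ncnt_closed: "k \<ge> 2 \<Longrightarrow> Ncnt k s = (if 1 \<le> s \<and> s \<le> k - 1 then fact (k - 2) else 0)"
proof (induction k arbitrary: s rule: nat_induct_at_least)
  case base
  let ?p = "(\<lambda>_. 0)(2 := 1) :: nat \<Rightarrow> nat"
  have "desc ?p 2 2 = {2}"
  proof -
    have "\<not> isdesc ?p 2 i" if "i < 2" for i using isdesc_le[of ?p 2 i] that by auto
    then show ?thesis unfolding desc_def by (auto simp: le_less)
  qed
  then have "cd ?p 2 = 1" by (simp add: cd_def)
  then have "{p \<in> rec_trees 2. cd p 2 = s} = (if s = 1 then {?p} else {})"
    unfolding rec_trees_2 by auto
  then show ?case unfolding Ncnt_def by auto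
next
  case (Suc k)
  have f: "fact (Suc k - 2) = (k - 1) * (fact (k - 2) :: nat)"
  proof -
    have "Suc k - 2 = Suc (k - 2)" "k - 1 = Suc (k - 2)" using Suc(1) by auto
    then show ?thesis by (simp only: fact_Suc) simp
  qed
  have A: "Ncnt k (s - 1) = (if 1 \<le> s - 1 \<and> s - 1 \<le> k - 1 then fact (k - 2) else 0)" using Suc(2) .
  have B: "Ncnt k s = (if 1 \<le> s \<and> s \<le> k - 1 then fact (k - 2) else 0)" using Suc(2) .
  consider "s = 0" | "s = 1" | "2 \<le> s \<and> s \<le> k - 1" | "s = k" | "s > k" using Suc(1) by linarith
  then show ?case
  proof cases
    case 1 then show ?thesis unfolding Ncnt_Suc[OF Suc(1)] B by simp
  next
    case 2 then show ?thesis unfolding Ncnt_Suc[OF Suc(1)] B f using Suc(1) by simp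
  next
    case 3
    then have e: "(s - 1) + (k - s) = k - 1" by linarith
    have "(s - 1) * fact (k - 2) + (k - s) * fact (k - 2) = ((s - 1) + (k - s)) * (fact (k - 2) :: nat)"
      by (simp only: add_mult_distrib)
    then have "(s - 1) * fact (k - 2) + (k - s) * fact (k - 2) = (k - 1) * (fact (k - 2) :: nat)"
      by (simp only: e)
    moreover have c: "1 \<le> s - 1" "s - 1 \<le> k - 1" "1 \<le> s" "s \<le> k - 1" "s \<le> Suc k - 1" using 3 by auto
    ultimately show ?thesis unfolding Ncnt_Suc[OF Suc(1)] A B f by (simp only: c if_True simp_thms)
  next
    case 4 then show ?thesis unfolding Ncnt_Suc[OF Suc(1)] A B f using Suc(1) by simp
  next
    case 5 then show ?thesis unfolding Ncnt_Suc[OF Suc(1)] A B f using Suc(1) by (simp, arith)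
  qed
qed

lemma card_sum_distinct:
  fixes S :: "nat set"
  assumes "finite S" "0 \<notin> S"
  shows "card S * (card S + 1) \<le> 2 * \<Sum>S"
  using assms
proof (induction "card S" arbitrary: S)
  case 0 then show ?case by simp
next
  case (Suc c)
  then have ne: "S \<noteq> {}" by auto
  define m where "m = Max S"
  have mS: "m \<in> S" using Suc(3) ne by (simp add: m_def)
  have "S \<subseteq> {1..m}"
  proof
    fix x assume x: "x \<in> S"
    then have "x \<noteq> 0" using Suc(4) by metis
    moreover have "x \<le> m" using x Suc(3) by (simp add: m_def)
    ultimately show "x \<in> {1..m}" by simp
  qed
  then have cm: "card S \<le> m" using card_mono[of "{1..m}" S] by simp
  have c: "c = card (S - {m})" using Suc(2) mS Suc(3) by simp
  have IH: "card (S - {m}) * (card (S - {m}) + 1) \<le> 2 * \<Sum>(S - {m})"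
    using Suc(1)[OF c] Suc(3,4) by auto
  have "\<Sum>S = m + \<Sum>(S - {m})" using mS Suc(3) by (simp add: sum.remove)
  then show ?case using IH cm c Suc(2)[symmetric] by (simp add: algebra_simps)
qed

lemma sum_psize_set_le: "(\<Sum>s\<in>psize ` set_mset M. s) \<le> sum_mset (image_mset psize M)"
proof (induction M)
  case empty then show ?case by simp
next
  case (add x M)
  have "(\<Sum>s\<in>psize ` set_mset (add_mset x M). s) = (\<Sum>s\<in>insert (psize x) (psize ` set_mset M). s)" by simp
  also have "\<dots> \<le> psize x + (\<Sum>s\<in>psize ` set_mset M. s)" by (simp add: sum.insert_if)
  also have "\<dots> \<le> psize x + sum_mset (image_mset psize M)" using add by simp
  finally show ?case by simp
qed

lemma psize_pos: "psize t \<ge> 1"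
  by (cases t) simp

lemma shape_at_unfold:
  "shape_at p n v = PNode (image_mset (shape_at p n) (mset_set (chil p n v)))"
  by (subst shape_at.simps) (simp add: chil_def)

lemma labelings_bound:
  assumes k: "psize t = k" "k \<ge> 2" and t: "t = PNode M"
  shows "num_inc_labelings t \<le> card (psize ` set_mset M) * fact (k - 2)"
proof -
  let ?S = "psize ` set_mset M"
  have sub: "{p \<in> rec_trees k. shape_at p k 1 = t} \<subseteq> (\<Union>s\<in>?S. {p \<in> rec_trees k. cd p k = s})"
  proof
    fix p assume p: "p \<in> {p \<in> rec_trees k. shape_at p k 1 = t}"
    then have "p 2 = 1" using k(2) unfolding rec_trees_def by (auto dest!: spec[of _ 2])
    then have "2 \<in> chil p k 1" using k(2) by (auto simp: chil_def)
    moreover have "M = image_mset (shape_at p k) (mset_set (chil p k 1))"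
      using p t shape_at_unfold[of p k 1] by simp
    ultimately have "shape_at p k 2 \<in># M" by simp
    moreover have "psize (shape_at p k 2) = cd p k" using psize_shape_at[of 2 k p] k(2) by (simp add: cd_def)
    ultimately show "p \<in> (\<Union>s\<in>?S. {p \<in> rec_trees k. cd p k = s})" using p by force
  qed
  have "num_inc_labelings t = card {p \<in> rec_trees k. shape_at p k 1 = t}"
    by (simp add: num_inc_labelings_def k(1))
  also have "\<dots> \<le> card (\<Union>s\<in>?S. {p \<in> rec_trees k. cd p k = s})"
    by (rule card_mono[OF _ sub]) (auto simp: finite_rec_trees)
  also have "\<dots> \<le> (\<Sum>s\<in>?S. card {p \<in> rec_trees k. cd p k = s})"
    by (rule card_UN_le) simp
  also have "\<dots> \<le> (\<Sum>s\<in>?S. fact (k - 2))"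
    by (rule sum_mono) (simp add: Ncnt_def[symmetric] Ncnt_closed[OF k(2)])
  finally show ?thesis by simp
qed

lemma kw_bound:
  assumes k: "psize t = k" "k \<ge> 2"
  shows "(real k * wt t)^2 * (real k - 1) \<le> 2"
proof -
  obtain M where t: "t = PNode M" by (cases t)
  let ?S = "psize ` set_mset M"
  let ?c = "card ?S"
  have "\<Sum>?S \<le> k - 1" using sum_psize_set_le[of M] k(1) t by simp
  moreover have "0 \<notin> ?S" using psize_pos by (metis image_iff not_one_le_zero)
  ultimately have cS: "?c * (?c + 1) \<le> 2 * (k - 1)" using card_sum_distinct[of ?S] by simp
  have L: "real (num_inc_labelings t) \<le> real ?c * fact (k - 2)"
    using labelings_bound[OF k t] by (metis of_nat_fact of_nat_le_iff of_nat_mult)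
  have fk: "fact k = real k * (real k - 1) * fact (k - 2)"
  proof -
    obtain j where j: "k = Suc (Suc j)" using k(2) by (metis add_2_eq_Suc le_Suc_ex)
    show ?thesis by (simp add: j algebra_simps)
  qed
  have "real k * wt t = real (num_inc_labelings t) / ((real k - 1) * fact (k - 2))"
    using k(2) by (simp add: wt_def k(1) fk field_simps)
  also have "\<dots> \<le> real ?c * fact (k - 2) / ((real k - 1) * fact (k - 2))"
    using k(2) L by (intro divide_right_mono) auto
  also have "\<dots> = real ?c / (real k - 1)" by simp
  finally have a: "real k * wt t \<le> real ?c / (real k - 1)" .
  have b: "0 \<le> real k * wt t" by (simp add: wt_def)
  have "(real k * wt t)^2 * (real k - 1) \<le> (real ?c / (real k - 1))^2 * (real k - 1)"
    using a b k(2) by (intro mult_right_mono power_mono) auto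
  also have "\<dots> = real ?c ^ 2 / (real k - 1)"
  proof -
    have gen: "(a / b)^2 * b = a^2 / b" if "b \<noteq> 0" for a b :: real
      using that by (simp add: power2_eq_square)
    show ?thesis by (rule gen) (use k(2) in auto)
  qed
  also have "\<dots> \<le> 2"
  proof -
    have "real ?c ^ 2 \<le> real (?c * (?c + 1))" by (simp add: power2_eq_square algebra_simps)
    also have "\<dots> \<le> real (2 * (k - 1))" using cS by linarith
    also have "\<dots> = 2 * (real k - 1)" using k(2) by (simp add: of_nat_diff)
    finally show ?thesis using k(2) by (simp add: field_simps)
  qed
  finally show ?thesis .
qed


lemma Jle_iff: "0 < (k::nat) \<Longrightarrow> ((n + k - 1) div k \<le> j) = (n \<le> j * k)"
proof -
  assume k: "0 < k"
  have "((n + k - 1) div k \<le> j) = ((n + k - 1) div k < Suc j)" by (simp only: less_Suc_eq_le)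
  also have "\<dots> = (n + k - 1 < Suc j * k)" using k by (rule div_less_iff_less_mult)
  also have "\<dots> = (n \<le> j * k)" using k by auto
  finally show ?thesis .
qed
lemma J_ge: "0 < (k::nat) \<Longrightarrow> n \<le> ((n + k - 1) div k) * k"
  using Jle_iff[of k n "(n + k - 1) div k"] by simp
lemma J_sub: "0 < (k::nat) \<Longrightarrow> (a + b + k - 1) div k \<le> (a + k - 1) div k + (b + k - 1) div k"
  using Jle_iff[of k "a + b"] J_ge[of k a] J_ge[of k b] by (simp add: add_mult_distrib)
lemma J_pos: "0 < (k::nat) \<Longrightarrow> 1 \<le> n \<Longrightarrow> 1 \<le> (n + k - 1) div k"
  using Jle_iff[of k n 0] by simp
lemma J_real: "0 < (k::nat) \<Longrightarrow> real n / real k \<le> real ((n + k - 1) div k)"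
proof -
  assume k: "0 < k"
  have "real n \<le> real ((n + k - 1) div k) * real k" using J_ge[OF k, of n] by (metis of_nat_le_iff of_nat_mult)
  then show ?thesis using k by (simp add: divide_le_eq)
qed

definition Jf :: "nat \<Rightarrow> nat \<Rightarrow> nat" where "Jf k n = (n + k - 1) div k"

lemma geom_le: "0 \<le> (b::real) \<Longrightarrow> b < 1 \<Longrightarrow> (\<Sum>i=1..m. b ^ i) \<le> 1 / (1 - b)"
proof -
  assume b: "0 \<le> b" "b < 1"
  have h: "(\<Sum>i<Suc m. b ^ i) = 1 + (\<Sum>i=1..m. b ^ i)" by (induction m) (auto simp: algebra_simps)
  have "(\<Sum>i=1..m. b ^ i) \<le> (\<Sum>i<Suc m. b ^ i)" unfolding h by linarith
  also have "\<dots> = (1 - b ^ Suc m) / (1 - b)" using b by (simp add: geometric_sum field_simps)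
  also have "\<dots> \<le> 1 / (1 - b)" using b by (intro divide_right_mono) auto
  finally show ?thesis .
qed

lemma eps_bound:
  fixes T e :: "nat \<Rightarrow> real" and k :: nat and x y \<rho> :: real
  assumes k: "k \<ge> 16" and x: "0 \<le> x" and y: "y = exp 16 * x" "y \<le> 1" and \<rho>: "0 < \<rho>" "\<rho> \<le> 2"
    and Tb: "\<And>i. i \<ge> 1 \<Longrightarrow> \<bar>T i\<bar> \<le> 2 * \<rho> * x ^ Jf k i / (real (Jf k i) * real k)"
    and rec: "\<And>m. e m = - real (m + 1) * T (m + 1) - (\<Sum>i=1..m. T i * e (m - i))"
  shows "\<bar>e m\<bar> \<le> y ^ Jf k (m + 1)"
proof (induction m rule: less_induct)
  case (less m)
  have k0: "0 < k" using k by simp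
  have y0: "0 \<le> y" using x y by simp
  define J where "J = Jf k (m + 1)"
  have J1: "1 \<le> J" unfolding J_def Jf_def using J_pos[OF k0, of "m+1"] by simp
  have Jk: "real (m + 1) \<le> real J * real k" unfolding J_def Jf_def
    using J_ge[OF k0, of "m+1"] by (metis of_nat_le_iff of_nat_mult)
  have xpow: "x ^ j = exp (- 16 * real j) * y ^ j" for j
    using y by (simp add: power_mult_distrib exp_of_nat_mult[symmetric] exp_minus field_simps)
  have e16: "exp (16::real) \<ge> 8"
  proof -
    have "(1 + 16::real) \<le> exp 16" by (rule exp_ge_add_one_self)
    then show ?thesis by simp
  qed
  have A: "real (m + 1) * \<bar>T (m + 1)\<bar> \<le> y ^ J / 2"
  proof -
    have "real (m + 1) * \<bar>T (m + 1)\<bar> \<le> real (m + 1) * (2 * \<rho> * x ^ J / (real J * real k))"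
      using Tb[of "m+1"] unfolding J_def by (intro mult_left_mono) auto
    also have "\<dots> \<le> real J * real k * (2 * \<rho> * x ^ J / (real J * real k))"
      using Jk x \<rho> by (intro mult_right_mono) auto
    also have "\<dots> = 2 * \<rho> * x ^ J" using J1 k0 by simp
    also have "\<dots> = 2 * \<rho> * exp (- 16 * real J) * y ^ J" by (simp add: xpow)
    also have "\<dots> \<le> 4 * exp (- 16) * y ^ J"
    proof -
      have "exp (- 16 * real J) \<le> exp (- 16)" using J1 by simp
      then show ?thesis using \<rho> y0 by (intro mult_right_mono) (auto intro: mult_mono)
    qed
    also have "\<dots> \<le> y ^ J / 2"
    proof -
      have "4 * exp (- 16) \<le> (1/2::real)" using e16 by (simp add: exp_minus field_simps)
      then show ?thesis using y0 by (metis mult_right_mono zero_le_power times_divide_eq_left mult_1)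
    qed
    finally show ?thesis .
  qed
  define b where "b = exp (- 16 / real k)"
  have b: "0 \<le> b" "b < 1" using k0 by (auto simp: b_def)
  have binv: "1 / (1 - b) \<le> 2 * real k / 16"
  proof -
    have "1 + 16 / real k \<le> exp (16 / real k)" by (rule exp_ge_add_one_self)
    then have "b * (1 + 16 / real k) \<le> 1" by (simp add: b_def exp_minus field_simps)
    then have "b \<le> real k / (real k + 16)" using k0 by (simp add: field_simps)
    then have "1 - b \<ge> 16 / (real k + 16)" using k0 by (simp add: field_simps)
    then have "1 / (1 - b) \<le> 1 / (16 / (real k + 16))" using b k0
      by (intro divide_left_mono) auto
    then have "1 / (1 - b) \<le> (real k + 16) / 16" by simp
    also have "\<dots> \<le> 2 * real k / 16" using k by simp
    finally show ?thesis .
  qed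
  have B: "(\<Sum>i=1..m. \<bar>T i\<bar> * \<bar>e (m - i)\<bar>) \<le> y ^ J / 2"
  proof -
    have "(\<Sum>i=1..m. \<bar>T i\<bar> * \<bar>e (m - i)\<bar>) \<le> (\<Sum>i=1..m. (2 * \<rho> / real k) * b ^ i * y ^ J)"
    proof (rule sum_mono)
      fix i assume i: "i \<in> {1..m}"
      have Ji: "1 \<le> Jf k i" using J_pos[OF k0, of i] i unfolding Jf_def by simp
      have IH: "\<bar>e (m - i)\<bar> \<le> y ^ Jf k (m - i + 1)" using less i by simp
      have sub: "J \<le> Jf k i + Jf k (m - i + 1)"
        using J_sub[OF k0, of i "m - i + 1"] i unfolding J_def Jf_def by simp
      have "\<bar>T i\<bar> * \<bar>e (m - i)\<bar> \<le> (2 * \<rho> * x ^ Jf k i / (real (Jf k i) * real k)) * y ^ Jf k (m - i + 1)"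
        using Tb[of i] i IH by (intro mult_mono) auto
      also have "\<dots> \<le> (2 * \<rho> * x ^ Jf k i / real k) * y ^ Jf k (m - i + 1)"
      proof -
        have "2 * \<rho> * x ^ Jf k i / (real (Jf k i) * real k) \<le> 2 * \<rho> * x ^ Jf k i / real k"
          using Ji k0 x \<rho> by (intro divide_left_mono) auto
        then show ?thesis using y0 by (intro mult_right_mono) auto
      qed
      also have "\<dots> = (2 * \<rho> / real k) * exp (- 16 * real (Jf k i)) * (y ^ Jf k i * y ^ Jf k (m - i + 1))"
        by (simp add: xpow)
      also have "\<dots> \<le> (2 * \<rho> / real k) * b ^ i * y ^ J"
      proof -
        have "y ^ Jf k i * y ^ Jf k (m - i + 1) = y ^ (Jf k i + Jf k (m - i + 1))" by (simp add: power_add)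
        also have "\<dots> \<le> y ^ J" by (rule power_decreasing[OF sub y0 y(2)])
        finally have p: "y ^ Jf k i * y ^ Jf k (m - i + 1) \<le> y ^ J" .
        have "exp (- 16 * real (Jf k i)) \<le> exp (- 16 * (real i / real k))"
          using J_real[OF k0, of i] unfolding Jf_def by simp
        also have "\<dots> = b ^ i" by (simp add: b_def exp_of_nat_mult[symmetric])
        finally have q: "exp (- 16 * real (Jf k i)) \<le> b ^ i" .
        show ?thesis using p q \<rho> k0 y0 b by (intro mult_mono mult_left_mono) auto
      qed
      finally show "\<bar>T i\<bar> * \<bar>e (m - i)\<bar> \<le> (2 * \<rho> / real k) * b ^ i * y ^ J" .
    qed
    also have "\<dots> = (2 * \<rho> / real k) * y ^ J * (\<Sum>i=1..m. b ^ i)"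
      by (simp add: sum_distrib_left sum_divide_distrib algebra_simps)
    also have "\<dots> \<le> (2 * \<rho> / real k) * y ^ J * (2 * real k / 16)"
      using geom_le[OF b, of m] binv \<rho> y0 k0 by (intro mult_left_mono) auto
    also have "\<dots> = \<rho> / 4 * y ^ J" using k0 by simp
    also have "\<dots> \<le> y ^ J / 2" using \<rho> y0 mult_right_mono[of \<rho> 2 "y^J"] by (simp add: mult.commute)
    finally show ?thesis .
  qed
  have "\<bar>e m\<bar> \<le> real (m + 1) * \<bar>T (m + 1)\<bar> + (\<Sum>i=1..m. \<bar>T i\<bar> * \<bar>e (m - i)\<bar>)"
  proof -
    have "\<bar>e m\<bar> \<le> \<bar>real (m + 1) * T (m + 1)\<bar> + \<bar>\<Sum>i=1..m. T i * e (m - i)\<bar>"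
      by (subst rec) linarith
    also have "\<bar>\<Sum>i=1..m. T i * e (m - i)\<bar> \<le> (\<Sum>i=1..m. \<bar>T i\<bar> * \<bar>e (m - i)\<bar>)"
      by (rule order_trans[OF sum_abs]) (simp add: abs_mult)
    finally show ?thesis by (simp add: abs_mult)
  qed
  then show ?case using A B unfolding J_def by simp
qed


definition Ec :: "real \<Rightarrow> nat \<Rightarrow> nat \<Rightarrow> real" where
  "Ec c k m = (if k dvd m then c ^ (m div k) / fact (m div k) else 0)"

lemma compX:
  assumes k: "0 < k"
  shows "fps_nth (fps_exp c oo fps_X ^ k) m = Ec c k m"
proof -
  have "fps_nth (fps_exp c oo fps_X ^ k) m = (\<Sum>i=0..m. fps_nth (fps_exp c) i * (if m = k * i then 1 else 0))"
    by (simp add: fps_compose_nth power_mult[symmetric])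
  also have "\<dots> = (\<Sum>i=0..m. if i = m div k \<and> k dvd m then c ^ i / fact i else 0)"
    using k by (intro sum.cong refl) auto
  also have "\<dots> = Ec c k m"
  proof (cases "k dvd m")
    case True
    have "m div k \<le> m" by simp
    then show ?thesis using True by (simp add: Ec_def)
  next
    case False then show ?thesis by (simp add: Ec_def)
  qed
  finally show ?thesis .
qed

lemma G_nth:
  assumes "0 < psize t"
  shows "fps_nth (G_fps t) l = (if l = 0 then 0 else Ec (- wt t) (psize t) (l - 1) / real l)"
  using compX[OF assms] by (simp add: G_fps_def fps_integral_def field_simps)

lemma G_nth0: "fps_nth (G_fps t) 0 = 0"
  by (simp add: G_fps_def fps_integral_def)

lemma ln_deriv_identity:
  fixes G :: "real fps"
  assumes G0: "fps_nth G 0 = 0"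
  shows "fps_deriv (- (fps_ln 1 oo (- G))) * (1 - G) = fps_deriv G"
proof -
  have mG0: "fps_nth (- G) 0 = 0" using G0 by simp
  define A where "A = inverse (1 + fps_X) oo (- G)"
  define B where "B = (1 + fps_X) oo (- G)"
  have d: "fps_deriv (- (fps_ln 1 oo (- G))) = A * fps_deriv G"
    using fps_compose_deriv[OF mG0, of "fps_ln 1"] by (simp add: fps_ln_deriv A_def)
  have b: "1 - G = B"
    using mG0 by (simp add: fps_compose_add_distrib B_def)
  have ab: "A * B = (1 :: real fps)"
  proof -
    have "A * B = (inverse (1 + fps_X) * (1 + fps_X)) oo (- G)"
      unfolding A_def B_def by (rule fps_compose_mult_distrib[OF mG0, symmetric])
    also have "inverse (1 + fps_X) * (1 + fps_X) = (1 :: real fps)"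
      by (rule inverse_mult_eq_1) simp
    finally show ?thesis by simp
  qed
  have "fps_deriv (- (fps_ln 1 oo (- G))) * (1 - G) = (A * B) * fps_deriv G"
    unfolding d b by (simp add: mult_ac)
  then show ?thesis by (simp add: ab)
qed

definition f_fps :: "ptree \<Rightarrow> real fps" where
  "f_fps t = - (fps_ln 1 oo (- G_fps t))"

lemma S_nth: "fps_nth (S_fps t) n = fps_nth (f_fps t) n - (if n = psize t then wt t else 0)"
  by (simp add: S_fps_def f_fps_def)

lemma coeff_rec:
  "fps_nth (fps_deriv (f_fps t)) m = real (m + 1) * fps_nth (G_fps t) (m + 1)
      + (\<Sum>i=1..m. fps_nth (G_fps t) i * fps_nth (fps_deriv (f_fps t)) (m - i))"
proof -
  let ?d = "fps_deriv (f_fps t)" and ?G = "G_fps t"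
  have "fps_nth ((1 - ?G) * ?d) m = fps_nth (fps_deriv ?G) m"
    using ln_deriv_identity[OF G_nth0, of t] by (simp add: f_fps_def mult.commute)
  moreover have "fps_nth ((1 - ?G) * ?d) m = fps_nth ?d m - (\<Sum>i=1..m. fps_nth ?G i * fps_nth ?d (m - i))"
  proof -
    have "fps_nth ((1 - ?G) * ?d) m = (\<Sum>i=0..m. fps_nth (1 - ?G) i * fps_nth ?d (m - i))" by (simp add: fps_mult_nth)
    also have "\<dots> = fps_nth (1 - ?G) 0 * fps_nth ?d m + (\<Sum>i=1..m. fps_nth (1 - ?G) i * fps_nth ?d (m - i))"
      by (simp add: sum.atLeast_Suc_atMost)
    also have "(\<Sum>i=1..m. fps_nth (1 - ?G) i * fps_nth ?d (m - i)) = - (\<Sum>i=1..m. fps_nth ?G i * fps_nth ?d (m - i))"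
      by (simp add: sum_negf[symmetric])
    finally show ?thesis by (simp add: G_nth0)
  qed
  ultimately show ?thesis by (simp add: algebra_simps)
qed


lemma renewal:
  fixes p a T :: "nat \<Rightarrow> real"
  assumes p0: "p 0 = 0"
    and T: "\<And>i. T i = 1 - (\<Sum>l\<le>i. p l)"
    and rec: "\<And>m. a m = real (m + 1) * p (m + 1) + (\<Sum>i=1..m. p i * a (m - i))"
  shows "a m - 1 = - real (m + 1) * T (m + 1) - (\<Sum>i=1..m. T i * (a (m - i) - 1))"
proof -
  have T0: "T 0 = 1" using T p0 by simp
  have TS: "T (Suc i) = T i - p (Suc i)" for i using T by simp
  have L: "(\<Sum>i=0..m. T i * a (m - i)) = (\<Sum>i=0..m. T i) - real (m + 1) * T (m + 1)" for m
  proof (induction m)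
    case 0
    show ?case using T0 TS[of 0] rec[of 0] by simp
  next
    case (Suc m)
    have "(\<Sum>i=0..Suc m. T i * a (Suc m - i)) = T 0 * a (Suc m) + (\<Sum>i=Suc 0..Suc m. T i * a (Suc m - i))"
      by (simp add: sum.atLeast_Suc_atMost)
    also have "(\<Sum>i=Suc 0..Suc m. T i * a (Suc m - i)) = (\<Sum>i=0..m. T (Suc i) * a (m - i))"
      by (subst sum.shift_bounds_cl_Suc_ivl) simp
    also have "\<dots> = (\<Sum>i=0..m. T i * a (m - i)) - (\<Sum>i=0..m. p (Suc i) * a (m - i))"
      by (simp add: TS algebra_simps sum_subtractf)
    also have "(\<Sum>i=0..m. p (Suc i) * a (m - i)) = (\<Sum>i=Suc 0..Suc m. p i * a (Suc m - i))"
      by (subst sum.shift_bounds_cl_Suc_ivl) simp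
    also have "T 0 * a (Suc m) = real (Suc m + 1) * p (Suc m + 1) + (\<Sum>i=1..Suc m. p i * a (Suc m - i))"
      using T0 rec[of "Suc m"] by simp
    finally have "(\<Sum>i=0..Suc m. T i * a (Suc m - i)) =
        real (Suc m + 1) * p (Suc m + 1) + (\<Sum>i=0..m. T i * a (m - i))" by simp
    also have "\<dots> = real (Suc m + 1) * p (Suc m + 1) + (\<Sum>i=0..m. T i) - real (m + 1) * T (m + 1)"
      using Suc by simp
    also have "\<dots> = (\<Sum>i=0..Suc m. T i) - real (Suc m + 1) * T (Suc m + 1)"
    proof -
      have h: "T (Suc m) = T (Suc (Suc m)) + p (Suc (Suc m))" using TS[of "Suc m"] by simp
      show ?thesis by (simp add: sum.atLeast0_atMost_Suc h algebra_simps)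
    qed
    finally show ?case .
  qed
  have "(\<Sum>i=0..m. T i * a (m - i)) = a m + (\<Sum>i=1..m. T i * a (m - i))"
    using T0 by (simp add: sum.atLeast_Suc_atMost)
  moreover have "(\<Sum>i=0..m. T i) = 1 + (\<Sum>i=1..m. T i)"
    using T0 by (simp add: sum.atLeast_Suc_atMost)
  moreover have "(\<Sum>i=1..m. T i * a (m - i)) = (\<Sum>i=1..m. T i) + (\<Sum>i=1..m. T i * (a (m - i) - 1))"
    by (simp add: algebra_simps sum.distrib sum_subtractf)
  ultimately show ?thesis using L[of m] by (simp add: algebra_simps)
qed


lemma Ec_sums:
  assumes k: "0 < k"
  shows "(\<lambda>m. Ec c k m * z ^ m) sums exp (c * z ^ k)"
proof -
  have sm: "strict_mono (\<lambda>j. j * k)" using k by (intro strict_monoI) simp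
  have "(\<lambda>j. Ec c k (j * k) * z ^ (j * k)) = (\<lambda>j. (c * z ^ k) ^ j /\<^sub>R fact j)"
  proof -
    have pc: "(z ^ j) ^ k = (z ^ k) ^ j" for j by (simp add: power_mult[symmetric] mult.commute)
    show ?thesis
      using k by (auto simp: Ec_def fun_eq_iff power_mult power_mult_distrib mult.commute[of j k] divide_inverse pc)
  qed
  then have "(\<lambda>j. Ec c k (j * k) * z ^ (j * k)) sums exp (c * z ^ k)"
    using exp_converges[of "c * z ^ k"] by simp
  moreover have "\<And>m. m \<notin> range (\<lambda>j. j * k) \<Longrightarrow> Ec c k m * z ^ m = 0"
    by (auto simp: Ec_def elim!: dvdE)
  ultimately show ?thesis using sums_mono_reindex[OF sm, of "\<lambda>m. Ec c k m * z ^ m"] by simp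
qed

lemma Ec_abs: "\<bar>Ec c k m * z ^ m\<bar> = Ec \<bar>c\<bar> k m * \<bar>z\<bar> ^ m"
  by (simp add: Ec_def abs_mult power_abs)

lemma Ec_abs_summable:
  assumes k: "0 < k"
  shows "summable (\<lambda>m. \<bar>Ec c k m * z ^ m\<bar>)"
  unfolding Ec_abs using Ec_sums[OF k, of "\<bar>c\<bar>" "\<bar>z\<bar>"] by (simp add: sums_summable)

definition gc :: "real \<Rightarrow> nat \<Rightarrow> nat \<Rightarrow> real" where
  "gc w k l = (if l = 0 then 0 else Ec (- w) k (l - 1) / real l)"

lemma gc_summable:
  assumes k: "0 < k"
  shows "summable (\<lambda>l. gc w k l * z ^ l)"
proof -
  have "summable (\<lambda>m. gc w k (Suc m) * z ^ Suc m)"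
  proof (rule summable_comparison_test[OF _ summable_mult[OF Ec_abs_summable[OF k, of "- w" z], of "\<bar>z\<bar>"]])
    show "\<exists>N. \<forall>n\<ge>N. norm (gc w k (Suc n) * z ^ Suc n) \<le> \<bar>z\<bar> * \<bar>Ec (- w) k n * z ^ n\<bar>"
    proof (intro exI allI impI)
      fix n :: nat
      have "norm (gc w k (Suc n) * z ^ Suc n) = \<bar>z\<bar> * \<bar>Ec (- w) k n * z ^ n\<bar> / real (Suc n)"
        by (simp add: gc_def abs_mult)
      also have "\<dots> \<le> \<bar>z\<bar> * \<bar>Ec (- w) k n * z ^ n\<bar>"
        using mult_left_mono[of 1 "1 + real n" "\<bar>z\<bar> * \<bar>Ec (- w) k n * z ^ n\<bar>"] by (simp add: divide_le_eq)
      finally show "norm (gc w k (Suc n) * z ^ Suc n) \<le> \<bar>z\<bar> * \<bar>Ec (- w) k n * z ^ n\<bar>" .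
    qed
  qed
  then show ?thesis by (subst summable_Suc_iff[symmetric])
qed

definition Fr :: "real \<Rightarrow> nat \<Rightarrow> real \<Rightarrow> real" where
  "Fr w k r = (\<Sum>l. gc w k l * r ^ l)"

lemma Fr_deriv:
  assumes k: "0 < k"
  shows "(Fr w k has_real_derivative exp (- w * r ^ k)) (at r within A)"
proof -
  have cr: "conv_radius (gc w k) = \<infinity>"
    by (rule conv_radius_inftyI'') (rule gc_summable[OF k])
  have "((\<lambda>r. \<Sum>l. gc w k l * r ^ l) has_field_derivative (\<Sum>n. diffs (gc w k) n * r ^ n)) (at r within A)"
    by (rule has_field_derivative_powser) (simp add: cr)
  moreover have "diffs (gc w k) n = Ec (- w) k n" for n
    by (simp add: diffs_def gc_def)
  moreover have "(\<Sum>n. Ec (- w) k n * r ^ n) = exp (- w * r ^ k)"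
    using Ec_sums[OF k] by (rule sums_unique[symmetric])
  ultimately show ?thesis by (simp add: Fr_def[abs_def])
qed

lemma Fr_deriv_at: "0 < k \<Longrightarrow> (Fr w k has_real_derivative exp (- w * r ^ k)) (at r)"
  by (rule Fr_deriv)

lemma Fr_0: "Fr w k 0 = 0"
  by (simp add: Fr_def gc_def)

lemma Fr_strict_mono:
  assumes k: "0 < k" and rs: "r < s"
  shows "Fr w k r < Fr w k s"
proof (rule DERIV_pos_imp_increasing[OF rs])
  fix x :: real
  show "\<exists>y. (Fr w k has_real_derivative y) (at x) \<and> 0 < y"
    by (rule exI[of _ "exp (- w * x ^ k)"]) (rule conjI[OF Fr_deriv_at[OF k]], simp)
qed

lemma Fr_cont: "0 < k \<Longrightarrow> continuous_on A (Fr w k)"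
  by (rule DERIV_continuous_on) (rule Fr_deriv)

lemma Fr_le:
  assumes k: "0 < k" and w: "0 \<le> w" and r: "0 \<le> r"
  shows "Fr w k r \<le> r"
proof -
  have "(\<lambda>r. r - Fr w k r) 0 \<le> (\<lambda>r. r - Fr w k r) r"
  proof (rule DERIV_nonneg_imp_nondecreasing[OF r])
    fix x :: real assume x: "0 \<le> x" "x \<le> r"
    have "((\<lambda>r. r - Fr w k r) has_real_derivative 1 - exp (- w * x ^ k)) (at x)"
      by (rule DERIV_diff[OF DERIV_ident Fr_deriv_at[OF k]])
    moreover have "exp (- w * x ^ k) \<le> 1" using w x by simp
    ultimately show "\<exists>y. ((\<lambda>r. r - Fr w k r) has_real_derivative y) (at x) \<and> 0 \<le> y" by force
  qed
  then show ?thesis by (simp add: Fr_0)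
qed

lemma Fr_ge:
  assumes k: "0 < k" and r: "0 \<le> r"
  shows "r - w * r ^ (k + 1) / real (k + 1) \<le> Fr w k r"
proof -
  let ?h = "\<lambda>r. Fr w k r - r + w * r ^ (k + 1) / real (k + 1)"
  have "?h 0 \<le> ?h r"
  proof (rule DERIV_nonneg_imp_nondecreasing[OF r])
    fix x :: real assume x: "0 \<le> x" "x \<le> r"
    have p0: "((\<lambda>r. r ^ (k + 1)) has_real_derivative real (k + 1) * x ^ k) (at x)"
      using DERIV_pow[of "k + 1" x] by simp
    have p: "((\<lambda>r. w * r ^ (k + 1) / real (k + 1)) has_real_derivative w * x ^ k) (at x)"
      by (rule DERIV_cong[OF DERIV_cdivide[OF DERIV_cmult[OF p0, of w], of "real (k + 1)"]]) simp
    have "(?h has_real_derivative exp (- w * x ^ k) - 1 + w * x ^ k) (at x)"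
      by (rule DERIV_add[OF DERIV_diff[OF Fr_deriv_at[OF k] DERIV_ident] p])
    moreover have "0 \<le> exp (- w * x ^ k) - 1 + w * x ^ k"
      using exp_ge_add_one_self[of "- w * x ^ k"] by simp
    ultimately show "\<exists>y. (?h has_real_derivative y) (at x) \<and> 0 \<le> y" by blast
  qed
  then show ?thesis by (simp add: Fr_0)
qed

lemma one_plus_pow_le: "0 < k \<Longrightarrow> (1 + 1 / real k) ^ k \<le> exp 1"
proof -
  assume k: "0 < k"
  have "(1 + 1 / real k) ^ k \<le> exp (1 / real k) ^ k"
    by (intro power_mono exp_ge_add_one_self) (auto)
  also have "\<dots> = exp 1" using k by (simp add: exp_of_nat_mult[symmetric])
  finally show ?thesis .
qed

lemma rho_exists:
  assumes k: "0 < k" and w: "0 \<le> w" and kw: "6 * real k * w \<le> 1"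
  shows "\<exists>\<rho>. 1 \<le> \<rho> \<and> \<rho> \<le> 1 + 1 / real k \<and> Fr w k \<rho> = 1"
proof -
  have a: "Fr w k 1 \<le> 1" using Fr_le[OF k w, of 1] by simp
  have "(1 + 1 / real k) ^ (k + 1) \<le> 6"
  proof -
    have "(1 + 1 / real k) ^ (k + 1) = (1 + 1 / real k) ^ k * (1 + 1 / real k)" by simp
    also have "\<dots> \<le> 3 * 2"
    proof (rule mult_mono)
      show "(1 + 1 / real k) ^ k \<le> 3" using one_plus_pow_le[OF k] exp_le by linarith
      show "1 + 1 / real k \<le> 2" using k by (simp add: divide_le_eq)
    qed auto
    finally show ?thesis by simp
  qed
  then have "w * (1 + 1 / real k) ^ (k + 1) / real (k + 1) \<le> w * 6 / real (k + 1)"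
    using w by (intro divide_right_mono mult_left_mono) auto
  also have "\<dots> \<le> 1 / real k" using kw k by (simp add: field_simps)
  finally have "1 \<le> (1 + 1 / real k) - w * (1 + 1 / real k) ^ (k + 1) / real (k + 1)" by simp
  also have "\<dots> \<le> Fr w k (1 + 1 / real k)" by (rule Fr_ge[OF k]) simp
  finally have b: "1 \<le> Fr w k (1 + 1 / real k)" .
  show ?thesis using IVT'[OF a b _ Fr_cont[OF k]] by auto
qed

lemma integral_Fr:
  assumes k: "0 < k" and r: "0 \<le> r"
  shows "integral {0..r} (\<lambda>v. exp (- w * v ^ k)) = Fr w k r"
proof -
  have "((\<lambda>v. exp (- w * v ^ k)) has_integral Fr w k r - Fr w k 0) {0..r}"
    by (rule fundamental_theorem_of_calculus[OF r])
       (rule Fr_deriv[OF k, THEN has_real_derivative_iff_has_vector_derivative[THEN iffD1]])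
  then show ?thesis by (simp add: integral_unique Fr_0)
qed

lemma rho_t_eq:
  assumes k: "psize t > 0" and \<rho>: "1 \<le> \<rho>" "Fr (wt t) (psize t) \<rho> = 1"
  shows "rho_t t = \<rho>"
proof -
  have "{r. 0 < r \<and> integral {0..r} (\<lambda>v. exp (- wt t * v ^ psize t)) = 1} = {\<rho>}"
  proof (intro equalityI subsetI)
    fix r assume "r \<in> {r. 0 < r \<and> integral {0..r} (\<lambda>v. exp (- wt t * v ^ psize t)) = 1}"
    then have r: "0 < r" "Fr (wt t) (psize t) r = 1" using integral_Fr[OF k] by auto
    show "r \<in> {\<rho>}"
    proof (rule ccontr)
      assume "r \<notin> {\<rho>}"
      then have "r < \<rho> \<or> \<rho> < r" by auto
      then show False using Fr_strict_mono[OF k, of r \<rho> "wt t"] Fr_strict_mono[OF k, of \<rho> r "wt t"] r \<rho> by auto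
    qed
  next
    fix r assume "r \<in> {\<rho>}"
    then show "r \<in> {r. 0 < r \<and> integral {0..r} (\<lambda>v. exp (- wt t * v ^ psize t)) = 1}"
      using \<rho> integral_Fr[OF k, of \<rho>] by auto
  qed
  then show ?thesis by (simp add: rho_t_def)
qed

lemma Jf_mult: "0 < k \<Longrightarrow> Jf k (j * k) = j"
proof -
  assume k: "0 < k"
  have "j * k + k - 1 = (k - 1) + j * k" using k by simp
  then have "Jf k (j * k) = ((k - 1) + j * k) div k" by (simp only: Jf_def)
  also have "\<dots> = j + (k - 1) div k" by (rule div_mult_self1) (use k in simp)
  also have "\<dots> = j" using k by simp
  finally show ?thesis .
qed

lemma Jf_Suc_mult: "0 < k \<Longrightarrow> Jf k (Suc (j * k)) = Suc j"
proof -
  assume k: "0 < k"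
  have "(Suc (j * k) + k - 1) div k = (k + j * k) div k" by simp
  also have "\<dots> = Suc j" using k by simp
  finally show ?thesis by (simp add: Jf_def)
qed

lemma Jf_Suc_ndvd:
  assumes k: "0 < k" and nd: "\<not> k dvd i"
  shows "Jf k (Suc i) = Jf k i"
proof -
  have iff: "(Jf k (Suc i) \<le> j) = (Jf k i \<le> j)" for j
  proof -
    have "(Suc i \<le> j * k) = (i \<le> j * k)"
    proof
      assume "i \<le> j * k"
      moreover have "i \<noteq> j * k" using nd by auto
      ultimately show "Suc i \<le> j * k" by simp
    qed simp
    then show ?thesis using Jle_iff[OF k, of "Suc i" j] Jle_iff[OF k, of i j] by (simp add: Jf_def)
  qed
  show ?thesis using iff[of "Jf k i"] iff[of "Jf k (Suc i)"] by simp
qed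

lemma Jf_mono: "0 < k \<Longrightarrow> i \<le> i' \<Longrightarrow> Jf k i \<le> Jf k i'"
  unfolding Jf_def by (intro div_le_mono) simp

definition qc :: "real \<Rightarrow> nat \<Rightarrow> real \<Rightarrow> nat \<Rightarrow> real" where
  "qc w k \<rho> j = (- (w * \<rho> ^ k)) ^ j * \<rho> / (fact j * (1 + real j * real k))"

lemma partial_sums_q:
  assumes k: "0 < k"
  shows "(\<Sum>l\<le>i. gc w k l * \<rho> ^ l) = (\<Sum>j<Jf k i. qc w k \<rho> j)"
proof (induction i)
  case 0
  have "Jf k 0 = 0" using k by (simp add: Jf_def)
  then show ?case by (simp add: gc_def)
next
  case (Suc i)
  show ?case
  proof (cases "k dvd i")
    case True
    then obtain j where j: "i = j * k" by (metis dvd_def mult.commute)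
    have e1: "Ec (- w) k (j * k) = (- w) ^ j / fact j" using k by (simp add: Ec_def)
    have e2: "(- (w * \<rho> ^ k)) ^ j = (- w) ^ j * \<rho> ^ (j * k)"
    proof -
      have "(- (w * \<rho> ^ k)) ^ j = ((- w) * \<rho> ^ k) ^ j" by simp
      also have "\<dots> = (- w) ^ j * (\<rho> ^ k) ^ j" by (rule power_mult_distrib)
      also have "(\<rho> ^ k) ^ j = \<rho> ^ (j * k)" by (simp add: power_mult[symmetric] mult.commute)
      finally show ?thesis .
    qed
    have e3: "real (Suc (j * k)) = 1 + real j * real k" by simp
    have "gc w k (Suc i) * \<rho> ^ Suc i = (- w) ^ j / fact j / (1 + real j * real k) * (\<rho> ^ (j * k) * \<rho>)"
      unfolding gc_def j e1 e3[symmetric] by (simp only: power_Suc2 diff_Suc_1 nat.simps if_False e1)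
    also have "\<dots> = qc w k \<rho> j" unfolding qc_def e2 by (simp add: mult_ac)
    finally show ?thesis using Suc j Jf_mult[OF k, of j] Jf_Suc_mult[OF k, of j] by simp
  next
    case False
    have "gc w k (Suc i) * \<rho> ^ Suc i = 0" using False by (simp add: gc_def Ec_def)
    then show ?thesis using Suc Jf_Suc_ndvd[OF k False] by simp
  qed
qed

lemma partial_sums_lim:
  assumes k: "0 < k"
  shows "(\<lambda>i. \<Sum>l\<le>i. gc w k l * \<rho> ^ l) \<longlonglongrightarrow> Fr w k \<rho>"
proof -
  have "(\<lambda>l. gc w k l * \<rho> ^ l) sums Fr w k \<rho>"
    unfolding Fr_def using gc_summable[OF k] by (rule summable_sums)
  then have "(\<lambda>n. \<Sum>l<n. gc w k l * \<rho> ^ l) \<longlonglongrightarrow> Fr w k \<rho>" by (simp add: sums_def)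
  then have "(\<lambda>n. \<Sum>l<Suc n. gc w k l * \<rho> ^ l) \<longlonglongrightarrow> Fr w k \<rho>" by (rule LIMSEQ_Suc)
  then show ?thesis by (simp add: lessThan_Suc_atMost)
qed

lemma tail_bound:
  assumes k: "0 < k" and w: "0 \<le> w" and \<rho>: "0 < \<rho>" and F: "Fr w k \<rho> = 1"
    and x: "w * \<rho> ^ k \<le> 1 / 2" and i: "1 \<le> i"
  shows "\<bar>1 - (\<Sum>l\<le>i. gc w k l * \<rho> ^ l)\<bar> \<le> 2 * \<rho> * (w * \<rho> ^ k) ^ Jf k i / (real (Jf k i) * real k)"
proof -
  define X where "X = w * \<rho> ^ k"
  define J where "J = Jf k i"
  have X0: "0 \<le> X" using w \<rho> by (simp add: X_def)
  have J1: "1 \<le> J" using J_pos[OF k i] by (simp add: J_def Jf_def)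
  define B where "B = 2 * \<rho> * X ^ J / (real J * real k)"
  have bnd: "\<bar>(\<Sum>l\<le>M. gc w k l * \<rho> ^ l) - (\<Sum>l\<le>i. gc w k l * \<rho> ^ l)\<bar> \<le> B" if M: "i \<le> M" for M
  proof -
    define J' where "J' = Jf k M"
    have JJ: "J \<le> J'" unfolding J_def J'_def using Jf_mono[OF k M] .
    have "(\<Sum>l\<le>M. gc w k l * \<rho> ^ l) - (\<Sum>l\<le>i. gc w k l * \<rho> ^ l) = (\<Sum>j<J'. qc w k \<rho> j) - (\<Sum>j<J. qc w k \<rho> j)"
      by (simp add: partial_sums_q[OF k] J_def J'_def)
    also have "\<dots> = (\<Sum>j\<in>{J..<J'}. qc w k \<rho> j)"
      using sum.atLeastLessThan_concat[of 0 J J' "qc w k \<rho>"] JJ by (simp add: atLeast0LessThan)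
    finally have eq: "(\<Sum>l\<le>M. gc w k l * \<rho> ^ l) - (\<Sum>l\<le>i. gc w k l * \<rho> ^ l) = (\<Sum>j\<in>{J..<J'}. qc w k \<rho> j)" .
    have "\<bar>\<Sum>j\<in>{J..<J'}. qc w k \<rho> j\<bar> \<le> (\<Sum>j\<in>{J..<J'}. \<rho> / (real J * real k) * X ^ j)"
    proof (rule order_trans[OF sum_abs], rule sum_mono)
      fix j assume j: "j \<in> {J..<J'}"
      have "\<bar>qc w k \<rho> j\<bar> = X ^ j * \<rho> / (fact j * (1 + real j * real k))"
        using X0 \<rho> w by (simp add: qc_def X_def abs_mult power_abs)
      also have "\<dots> \<le> X ^ j * \<rho> / (real J * real k)"
      proof (rule divide_left_mono)
        have "real J * real k \<le> real j * real k" using j by (intro mult_right_mono) auto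
        then have "real J * real k \<le> 1 * (1 + real j * real k)" by simp
        also have "\<dots> \<le> fact j * (1 + real j * real k)"
          by (intro mult_right_mono) auto
        finally show "real J * real k \<le> fact j * (1 + real j * real k)" .
      qed (use X0 \<rho> J1 k in \<open>auto intro!: mult_pos_pos add_pos_nonneg\<close>)
      finally show "\<bar>qc w k \<rho> j\<bar> \<le> \<rho> / (real J * real k) * X ^ j" by (simp add: mult.commute)
    qed
    also have "\<dots> = \<rho> / (real J * real k) * (\<Sum>j\<in>{J..<J'}. X ^ j)"
      by (simp add: sum_distrib_left)
    also have "(\<Sum>j\<in>{J..<J'}. X ^ j) \<le> 2 * X ^ J"
    proof -
      have "(\<Sum>j\<in>{J..<J'}. X ^ j) = X ^ J * (\<Sum>j<J' - J. X ^ j)"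
      proof -
        have "(\<Sum>j\<in>{J..<J'}. X ^ j) = (\<Sum>j<J' - J. X ^ (J + j))"
        proof -
          have "{J..<J'} = (\<lambda>j. J + j) ` {..<J' - J}"
          proof (intro equalityI subsetI)
            fix z assume "z \<in> {J..<J'}"
            then show "z \<in> (\<lambda>j. J + j) ` {..<J' - J}" by (intro image_eqI[of _ _ "z - J"]) auto
          qed auto
          then show ?thesis by (simp add: sum.reindex)
        qed
        then show ?thesis by (simp add: power_add sum_distrib_left)
      qed
      also have "(\<Sum>j<J' - J. X ^ j) \<le> 2"
      proof -
        have X1: "X < 1" using x by (simp add: X_def)
        have "(\<Sum>j<J' - J. X ^ j) = (1 - X ^ (J' - J)) / (1 - X)"
          using X1 by (simp add: geometric_sum field_simps)
        also have "\<dots> \<le> 1 / (1 - X)" using X0 X1 by (intro divide_right_mono) auto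
        also have "\<dots> \<le> 2" using x X1 by (simp add: X_def field_simps)
        finally show ?thesis .
      qed
      then have "X ^ J * (\<Sum>j<J' - J. X ^ j) \<le> X ^ J * 2" using X0 by (intro mult_left_mono) auto
      finally show ?thesis by simp
    qed
    then have "\<rho> / (real J * real k) * (\<Sum>j\<in>{J..<J'}. X ^ j) \<le> \<rho> / (real J * real k) * (2 * X ^ J)"
      using \<rho> by (intro mult_left_mono) auto
    also have "\<dots> = B" by (simp add: B_def)
    finally show ?thesis using eq by simp
  qed
  have lim: "(\<lambda>M. \<bar>(\<Sum>l\<le>M. gc w k l * \<rho> ^ l) - (\<Sum>l\<le>i. gc w k l * \<rho> ^ l)\<bar>) \<longlonglongrightarrow> \<bar>1 - (\<Sum>l\<le>i. gc w k l * \<rho> ^ l)\<bar>"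
    using partial_sums_lim[OF k, of w \<rho>] F by (intro tendsto_intros) auto
  have "\<bar>1 - (\<Sum>l\<le>i. gc w k l * \<rho> ^ l)\<bar> \<le> B"
    by (rule LIMSEQ_le_const2[OF lim]) (use bnd in auto)
  then show ?thesis by (simp add: B_def X_def J_def)
qed


lemma pow2_ge: "1 \<le> J \<Longrightarrow> real J \<le> 2 ^ (J - 1)"
proof (induction J rule: nat_induct_at_least)
  case base then show ?case by simp
next
  case (Suc n)
  have "real (Suc n) \<le> 2 * real n" using Suc(1) by simp
  also have "\<dots> \<le> 2 * 2 ^ (n - 1)" using Suc(2) by simp
  also have "\<dots> = 2 ^ (Suc n - 1)" using Suc(1) by (cases n) auto
  finally show ?case .
qed

lemma exp16: "exp (16::real) \<le> 3 ^ 16"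
proof -
  have "exp (16::real) = exp 1 ^ 16" by (simp add: exp_of_nat_mult[symmetric])
  also have "\<dots> \<le> 3 ^ 16" by (intro power_mono exp_le) auto
  finally show ?thesis .
qed

lemma main_bound:
  fixes t :: ptree and n :: nat
  assumes kD: "300000000 \<le> psize t" and kn: "psize t \<le> n"
  shows "\<bar>fps_nth (S_fps t) n - rho_t t powr (- real n) / real n\<bar>
           \<le> (3 ^ 17 + 6) * (rho_t t powr (- real n) / real n) / sqrt (ln (real n))"
proof -
  define k where "k = psize t"
  define w where "w = wt t"
  have k16: "16 \<le> k" and k0: "0 < k" using kD by (auto simp: k_def)
  have kreal: "300000000 \<le> real k" using kD by (simp add: k_def)
  have w0: "0 \<le> w" by (simp add: w_def wt_def)
  have kwb: "(real k * w) ^ 2 * (real k - 1) \<le> 2" using kw_bound[of t k] k16 by (simp add: k_def w_def)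
  have kw0: "0 \<le> real k * w" using w0 by simp
  have kw2: "(real k * w) ^ 2 * real k \<le> 4"
  proof -
    have "(real k * w) ^ 2 * real k \<le> (real k * w) ^ 2 * (2 * (real k - 1))"
      using kreal by (intro mult_left_mono) auto
    also have "\<dots> = 2 * ((real k * w) ^ 2 * (real k - 1))" by simp
    also have "\<dots> \<le> 4" using kwb by linarith
    finally show ?thesis .
  qed
  have kw1: "real k * w \<le> 1 / 8"
  proof (rule ccontr)
    assume "\<not> real k * w \<le> 1 / 8"
    then have "(1/8) ^ 2 \<le> (real k * w) ^ 2" by (intro power_mono) auto
    then have "(1/8) ^ 2 * real k \<le> (real k * w) ^ 2 * real k" by (intro mult_right_mono) auto
    then have "(1/8) ^ 2 * real k \<le> 4" using kw2 by linarith
    then have "real k \<le> 256" by (simp add: power2_eq_square)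
    then show False using kreal by linarith
  qed
  have kwsq: "real k * w * sqrt (real k) \<le> 2"
  proof -
    have "(real k * w * sqrt (real k)) ^ 2 = (real k * w) ^ 2 * real k"
      by (simp add: power_mult_distrib)
    then have "(real k * w * sqrt (real k)) ^ 2 \<le> 4" using kw2 by linarith
    then have "(real k * w * sqrt (real k)) ^ 2 \<le> 2 ^ 2" by simp
    then show ?thesis by (rule power2_le_imp_le) simp
  qed
  obtain \<rho> where \<rho>: "1 \<le> \<rho>" "\<rho> \<le> 1 + 1 / real k" "Fr w k \<rho> = 1"
    using rho_exists[OF k0 w0] kw1 by auto
  have rho_eq: "rho_t t = \<rho>" using rho_t_eq[of t \<rho>] \<rho> k0 by (simp add: k_def w_def)
  have ik: "1 / real k \<le> 1" using k0 by simp
  have \<rho>0: "0 < \<rho>" and \<rho>2: "\<rho> \<le> 2" using \<rho>(1,2) ik by linarith+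
  have \<rho>k: "\<rho> ^ k \<le> 3"
  proof -
    have "\<rho> ^ k \<le> (1 + 1 / real k) ^ k" using \<rho> by (intro power_mono) auto
    also have "\<dots> \<le> exp 1" by (rule one_plus_pow_le[OF k0])
    also have "\<dots> \<le> 3" by (rule exp_le)
    finally show ?thesis .
  qed
  define x where "x = w * \<rho> ^ k"
  define y where "y = exp 16 * x"
  have x0: "0 \<le> x" using w0 \<rho>0 by (simp add: x_def)
  have x3: "x \<le> 3 * w" using \<rho>k w0 by (simp add: x_def mult_left_mono mult.commute)
  have yk: "y * real k \<le> 3 ^ 17"
  proof -
    have "y \<le> 3 ^ 16 * (3 * w)" unfolding y_def
      by (rule mult_mono[OF exp16 x3]) (use x0 in auto)
    then have "y * real k \<le> 3 ^ 16 * (3 * w) * real k" by (rule mult_right_mono) simp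
    also have "\<dots> = 3 ^ 17 * (real k * w)" by simp
    also have "\<dots> \<le> 3 ^ 17 * 1" using kw1 by (intro mult_left_mono) auto
    finally show ?thesis by simp
  qed
  have y0: "0 \<le> y" using x0 by (simp add: y_def)
  have yhalf: "y \<le> 1 / 2"
  proof -
    have "(3::real) ^ 17 \<le> (1/2) * real k" using kreal by simp
    then have "y * real k \<le> (1/2) * real k" using yk by linarith
    then show ?thesis by (rule mult_right_le_imp_le) (use k0 in simp)
  qed
  have xhalf: "x \<le> 1 / 2"
  proof -
    have "x \<le> y" using x0 mult_right_mono[of 1 "exp 16" x] by (simp add: y_def)
    then show ?thesis using yhalf by simp
  qed
  define d where "d m = fps_nth (fps_deriv (f_fps t)) m" for m
  define p where "p l = gc w k l * \<rho> ^ l" for l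
  define T where "T i = 1 - (\<Sum>l\<le>i. p l)" for i
  define a where "a m = d m * \<rho> ^ (m + 1)" for m
  have Gn: "fps_nth (G_fps t) l = gc w k l" for l
    using G_nth[of t l] k0 by (simp add: gc_def k_def w_def)
  have arec: "a m = real (m + 1) * p (m + 1) + (\<Sum>i=1..m. p i * a (m - i))" for m
  proof -
    have "a m = (real (m + 1) * gc w k (m + 1) + (\<Sum>i=1..m. gc w k i * d (m - i))) * \<rho> ^ (m + 1)"
      using coeff_rec[of t m] by (simp add: a_def d_def Gn)
    also have "\<dots> = real (m + 1) * p (m + 1) + (\<Sum>i=1..m. gc w k i * d (m - i) * \<rho> ^ (m + 1))"
      by (simp add: p_def algebra_simps sum_distrib_right sum_distrib_left)
    also have "(\<Sum>i=1..m. gc w k i * d (m - i) * \<rho> ^ (m + 1)) = (\<Sum>i=1..m. p i * a (m - i))"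
    proof (rule sum.cong[OF refl])
      fix i assume "i \<in> {1..m}"
      then have "\<rho> ^ (m + 1) = \<rho> ^ i * \<rho> ^ (m - i + 1)" by (simp add: power_add[symmetric])
      then show "gc w k i * d (m - i) * \<rho> ^ (m + 1) = p i * a (m - i)"
        by (simp add: p_def a_def)
    qed
    finally show ?thesis .
  qed
  have erec: "a m - 1 = - real (m + 1) * T (m + 1) - (\<Sum>i=1..m. T i * (a (m - i) - 1))" for m
  proof -
    have p0: "p 0 = 0" by (simp add: p_def gc_def)
    have Ti: "\<And>i. T i = 1 - (\<Sum>l\<le>i. p l)" by (simp add: T_def)
    show ?thesis by (rule renewal[of p T a, OF p0 Ti arec])
  qed
  have Tb: "\<bar>T i\<bar> \<le> 2 * \<rho> * x ^ Jf k i / (real (Jf k i) * real k)" if "i \<ge> 1" for i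
    using tail_bound[OF k0 w0 \<rho>0 \<rho>(3) _ that] xhalf by (simp add: T_def p_def x_def)
  have eb: "\<bar>a m - 1\<bar> \<le> y ^ Jf k (m + 1)" for m
    by (rule eps_bound[OF k16 x0 y_def _ \<rho>0 \<rho>2 Tb erec]) (use yhalf in auto)
  have n1: "1 \<le> n" using kn k0 by (simp add: k_def)
  define R where "R = rho_t t powr (- real n) / real n"
  have R: "R = 1 / (\<rho> ^ n * real n)"
    using \<rho>0 by (simp add: R_def rho_eq powr_minus_divide powr_realpow)
  have R0: "0 < R" using R \<rho>0 n1 by simp
  have fn: "fps_nth (f_fps t) n = R * a (n - 1)"
  proof -
    have "d (n - 1) = real n * fps_nth (f_fps t) n" using n1 by (simp add: d_def)
    then show ?thesis using n1 \<rho>0 by (simp add: R a_def field_simps)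
  qed
  define J where "J = Jf k n"
  have J1: "1 \<le> J" using J_pos[OF k0 n1] by (simp add: J_def Jf_def)
  have Jn: "real n \<le> real J * real k" using J_ge[OF k0, of n] unfolding J_def Jf_def
    by (metis of_nat_le_iff of_nat_mult)
  have ea: "\<bar>a (n - 1) - 1\<bar> \<le> 3 ^ 17 / real n"
  proof -
    have "\<bar>a (n - 1) - 1\<bar> \<le> y ^ J" using eb[of "n - 1"] n1 by (simp add: J_def)
    also have "y ^ J = y * y ^ (J - 1)" using J1 by (metis Suc_diff_le diff_Suc_1 power_Suc)
    also have "\<dots> \<le> y * (1 / 2) ^ (J - 1)" using y0 yhalf by (intro mult_left_mono power_mono) auto
    also have "\<dots> = y / 2 ^ (J - 1)" by (simp add: power_one_over)
    also have "\<dots> \<le> y / real J" using pow2_ge[OF J1] J1 y0 by (intro divide_left_mono) auto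
    also have "\<dots> = y * real k / (real J * real k)" using k0 by simp
    also have "\<dots> \<le> 3 ^ 17 / (real J * real k)" using yk J1 k0 by (intro divide_right_mono) auto
    also have "\<dots> \<le> 3 ^ 17 / real n" using Jn n1 by (intro divide_left_mono) auto
    finally show ?thesis .
  qed
  have wb: "(if n = k then w else 0) \<le> R * (6 / sqrt (real n))"
  proof (cases "n = k")
    case True
    have "w = R * (real k * w * \<rho> ^ k)" using True R \<rho>0 k0 by (simp add: field_simps)
    also have "\<dots> \<le> R * (real k * w * 3)" using R0 \<rho>k kw0 by (intro mult_left_mono) auto
    also have "\<dots> \<le> R * (6 / sqrt (real k))"
    proof -
      have "real k * w * 3 \<le> 6 / sqrt (real k)" using kwsq k0 by (simp add: field_simps)
      then show ?thesis using R0 by (intro mult_left_mono) auto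
    qed
    finally show ?thesis using True by simp
  qed (use R0 in simp)
  have "\<bar>fps_nth (S_fps t) n - R\<bar> = \<bar>R * (a (n - 1) - 1) - (if n = k then w else 0)\<bar>"
    by (simp add: S_nth fn k_def w_def algebra_simps)
  also have "\<dots> \<le> R * \<bar>a (n - 1) - 1\<bar> + (if n = k then w else 0)"
  proof -
    define c where "c = (if n = k then w else 0)"
    have c0: "0 \<le> c" using w0 by (simp add: c_def)
    have "\<bar>R * (a (n - 1) - 1) - c\<bar> \<le> \<bar>R * (a (n - 1) - 1)\<bar> + \<bar>c\<bar>" by (rule abs_triangle_ineq4)
    also have "\<dots> = R * \<bar>a (n - 1) - 1\<bar> + c" using R0 c0 by (simp add: abs_mult)
    finally show ?thesis by (simp add: c_def)
  qed
  also have "\<dots> \<le> R * (3 ^ 17 / real n) + R * (6 / sqrt (real n))"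
    using ea wb R0 by (intro add_mono mult_left_mono) auto
  also have "\<dots> \<le> R * ((3 ^ 17 + 6) / sqrt (real n))"
  proof -
    have "3 ^ 17 / real n \<le> 3 ^ 17 / sqrt (real n)"
    proof -
      have "real n \<le> real n ^ 2" using n1 by (simp add: power2_eq_square)
      then have "sqrt (real n) \<le> sqrt (real n ^ 2)" by (rule real_sqrt_le_mono)
      then have sq: "sqrt (real n) \<le> real n" by simp
      show ?thesis using n1 sq by (intro divide_left_mono) auto
    qed
    then have "3 ^ 17 / real n + 6 / sqrt (real n) \<le> (3 ^ 17 + 6) / sqrt (real n)"
      by (simp add: add_divide_distrib)
    then have "R * (3 ^ 17 / real n + 6 / sqrt (real n)) \<le> R * ((3 ^ 17 + 6) / sqrt (real n))"
      using R0 by (intro mult_left_mono) auto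
    then show ?thesis by (simp only: distrib_left)
  qed
  also have "\<dots> \<le> R * ((3 ^ 17 + 6) / sqrt (ln (real n)))"
  proof -
    have n2: "2 \<le> n" using kn kD by (simp add: k_def)
    have "0 < ln (real n)" using n2 by simp
    moreover have "ln (real n) \<le> real n" using ln_le_minus_one[of "real n"] n1 by simp
    ultimately have "sqrt (ln (real n)) \<le> sqrt (real n)" "0 < sqrt (ln (real n))" by auto
    then have "(3 ^ 17 + 6) / sqrt (real n) \<le> (3 ^ 17 + 6) / sqrt (ln (real n))"
      by (intro divide_left_mono) auto
    then show ?thesis using R0 by (intro mult_left_mono) auto
  qed
  also have "R * ((3 ^ 17 + 6) / sqrt (ln (real n))) = (3 ^ 17 + 6) * R / sqrt (ln (real n))" by simp
  finally show ?thesis by (simp only: R_def)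
qed

theorem lemma2p4:
  "\<exists>D::nat. D > 0 \<and> (\<exists>C N. \<forall>n \<ge> N. \<forall>t. D \<le> psize t \<and> psize t \<le> n \<longrightarrow>
      \<bar>fps_nth (S_fps t) n - rho_t t powr (- real n) / real n\<bar>
        \<le> C * (rho_t t powr (- real n) / real n) / sqrt (ln (real n)))"
proof -
  have "\<forall>n \<ge> 0. \<forall>t. 300000000 \<le> psize t \<and> psize t \<le> n \<longrightarrow>
      \<bar>fps_nth (S_fps t) n - rho_t t powr (- real n) / real n\<bar>
        \<le> (3 ^ 17 + 6) * (rho_t t powr (- real n) / real n) / sqrt (ln (real n))"
    using main_bound by blast
  then have "\<exists>C N. \<forall>n \<ge> N. \<forall>t. 300000000 \<le> psize t \<and> psize t \<le> n \<longrightarrow>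
      \<bar>fps_nth (S_fps t) n - rho_t t powr (- real n) / real n\<bar>
        \<le> C * (rho_t t powr (- real n) / real n) / sqrt (ln (real n))" by blast
  then show ?thesis by (intro exI[of _ "300000000::nat"] conjI) simp_all
qed


end
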